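(* For every integer $N>1$, the number of self-complementary achiral necklaces on $2N$ beads is even.
   Context: Here a necklace on $2N$ beads is a circular arrangement of $2N$ beads, each colored with one of two colors, modulo cyclic rotation. It is achiral if it coincides (up to rotation) with its mirror reflection, and self-complementary if it coincides (up to rotation) with the necklace obtained by swapping the two colors. *)

theory Defs
  imports Main
begin

text \<open>A binary word of length n is a bool list of length n (the two colours are
True/False).  A necklace is the orbit of a word under cyclic rotation.\<close>

definition rot_class :: "bool list \<Rightarrow> bool list set" where
  "rot_class w = {rotate k w | k. True}"

definition necklaces :: "nat \<Rightarrow> bool list set set" where
  "necklaces n = rot_class ` {w. length w = n}"

definition achiral :: "bool list set \<Rightarrow> bool" where
  "achiral C \<longleftrightarrow> rev ` C = C"

definition self_complementary :: "bool list set \<Rightarrow> bool" where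
  "self_complementary C \<longleftrightarrow> map Not ` C = C"

end

theory Submission
  imports Defs
begin

lemma rot_class_self: "w \<in> rot_class w"
  unfolding rot_class_def by (auto intro!: exI[of _ 0])

lemma rot_class_length: "x \<in> rot_class w \<Longrightarrow> length x = length w"
  unfolding rot_class_def by auto

lemma rot_inv: "rotate (length w - k mod length w) (rotate k w) = w"
proof (cases "length w = 0")
  case False
  define n where "n = length w"
  have h: "k mod n < n" using False unfolding n_def by simp
  have "k = n * (k div n) + k mod n" by simp
  then have e: "n - k mod n + k = n * (k div n) + n" using h by linarith
  have "rotate (n - k mod n) (rotate k w) = rotate (n - k mod n + k) w"
    by (simp add: rotate_rotate)
  also have "\<dots> = w" unfolding e by (rule rotate_id) (simp add: n_def)
  finally show ?thesis unfolding n_def .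
qed simp

lemma rot_class_sym: assumes "x \<in> rot_class w" shows "w \<in> rot_class x"
proof -
  obtain k where x: "x = rotate k w" using assms unfolding rot_class_def by auto
  have "w = rotate (length w - k mod length w) x" using rot_inv[of w k] x by simp
  then show ?thesis unfolding rot_class_def by blast
qed

lemma rot_class_trans: "x \<in> rot_class w \<Longrightarrow> rot_class x \<subseteq> rot_class w"
  unfolding rot_class_def by (auto simp: rotate_rotate)

lemma rot_class_eq: assumes "x \<in> rot_class w" shows "rot_class x = rot_class w"
proof (rule subset_antisym)
  show "rot_class x \<subseteq> rot_class w" using assms by (rule rot_class_trans)
  show "rot_class w \<subseteq> rot_class x" using rot_class_sym[OF assms] by (rule rot_class_trans)
qed

lemma rev_rot_class: "rev ` rot_class w = rot_class (rev w)"
proof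
  show "rev ` rot_class w \<subseteq> rot_class (rev w)"
  proof
    fix y assume "y \<in> rev ` rot_class w"
    then obtain k where y: "y = rev (rotate k w)" unfolding rot_class_def by auto
    have "rotate k (rev (rev w)) = rev (rotate (length w - k mod length w) (rev w))"
      using rotate_rev[of k "rev w"] by simp
    then have "y = rotate (length w - k mod length w) (rev w)" using y by simp
    then show "y \<in> rot_class (rev w)" unfolding rot_class_def by auto
  qed
next
  show "rot_class (rev w) \<subseteq> rev ` rot_class w"
  proof
    fix y assume "y \<in> rot_class (rev w)"
    then obtain k where y: "y = rotate k (rev w)" unfolding rot_class_def by auto
    then have "y = rev (rotate (length w - k mod length w) w)" by (simp add: rotate_rev)
    then show "y \<in> rev ` rot_class w" unfolding rot_class_def by auto
  qed
qed

lemma map_rot_class: "map f ` rot_class w = rot_class (map f w)"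
  unfolding rot_class_def by (auto simp: rotate_map)

lemma achiral_iff: "achiral (rot_class w) \<longleftrightarrow> rev w \<in> rot_class w"
proof
  assume "achiral (rot_class w)"
  then have "rot_class (rev w) = rot_class w" unfolding achiral_def rev_rot_class .
  then show "rev w \<in> rot_class w" using rot_class_self[of "rev w"] by simp
next
  assume "rev w \<in> rot_class w"
  then have "rot_class (rev w) = rot_class w" by (rule rot_class_eq)
  then show "achiral (rot_class w)" unfolding achiral_def rev_rot_class .
qed

lemma sc_iff: "self_complementary (rot_class w) \<longleftrightarrow> map Not w \<in> rot_class w"
proof
  assume "self_complementary (rot_class w)"
  then have "rot_class (map Not w) = rot_class w" unfolding self_complementary_def map_rot_class .
  then show "map Not w \<in> rot_class w" using rot_class_self[of "map Not w"] by simp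
next
  assume "map Not w \<in> rot_class w"
  then have "rot_class (map Not w) = rot_class w" by (rule rot_class_eq)
  then show "self_complementary (rot_class w)" unfolding self_complementary_def map_rot_class .
qed

lemma rot_mult: assumes "rotate p w = w" shows "rotate (m*p) w = w"
proof (induction m)
  case (Suc m)
  have "rotate (Suc m * p) w = rotate p (rotate (m*p) w)" by (simp add: rotate_rotate)
  also have "\<dots> = w" using Suc assms by simp
  finally show ?case .
qed simp

lemma rot_dvd: assumes "rotate p w = w" "p dvd m" shows "rotate m w = w"
proof -
  obtain c where "m = p * c" using assms(2) by (elim dvdE)
  then have "m = c * p" by simp
  then show ?thesis using rot_mult[OF assms(1), of c] by simp
qed

lemma rot_gcd: assumes "rotate p w = w" "rotate q w = w" shows "rotate (gcd p q) w = w"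
proof (cases "p = 0")
  case True then show ?thesis using assms by simp
next
  case False
  then obtain x y where xy: "p * x = q * y + gcd p q" using bezout_nat by blast
  have "w = rotate (p*x) w" using rot_mult[OF assms(1), of x] by (simp add: mult.commute)
  also have "\<dots> = rotate (gcd p q) (rotate (q*y) w)" by (simp add: xy rotate_rotate add.commute)
  also have "\<dots> = rotate (gcd p q) w" using rot_mult[OF assms(2), of y] by (simp add: mult.commute)
  finally show ?thesis by simp
qed

lemma core:
  assumes a2: "rotate (2*a) w = w" and k2: "rotate (2*k) w = w" and na: "rotate a w \<noteq> w"
  shows "rotate k w = w \<or> rotate k w = rotate a w"
proof -
  define g where "g = gcd a k"
  have "gcd (2*a) (2*k) = 2 * g" unfolding g_def by (simp add: gcd_mult_distrib_nat)
  then have g2: "rotate (2*g) w = w" using rot_gcd[OF a2 k2] by simp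
  have "a \<noteq> 0"
  proof
    assume "a = 0" then show False using na by simp
  qed
  then have gpos: "g > 0" unfolding g_def by simp
  obtain a' where a': "a = g * a'" unfolding g_def by (meson dvd_def gcd_dvd1)
  obtain k' where k': "k = g * k'" unfolding g_def by (meson dvd_def gcd_dvd2)
  have "odd a'"
  proof
    assume "even a'"
    then obtain s where "a' = 2*s" by (elim evenE)
    then have "a = (2*g)*s" using a' by simp
    then have "2*g dvd a" by (rule dvdI)
    then have "rotate a w = w" by (rule rot_dvd[OF g2])
    then show False using na by (rule notE[rotated])
  qed
  show ?thesis
  proof (cases "even k'")
    case True
    then obtain s where "k' = 2*s" by (elim evenE)
    then have "k = (2*g)*s" using k' by simp
    then have "2*g dvd k" by (rule dvdI)
    then have "rotate k w = w" by (rule rot_dvd[OF g2])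
    then show ?thesis by (rule disjI1)
  next
    case False
    show ?thesis
    proof (cases "a \<le> k")
      case True
      then have "a' \<le> k'" using a' k' gpos by simp
      then have "even (k' - a')" using False \<open>odd a'\<close> by simp
      then obtain t where t: "k' - a' = 2*t" by (elim evenE)
      have "k - a = g * (k' - a')" using a' k' by (simp add: diff_mult_distrib2)
      then have "k - a = (2*g) * t" using t by simp
      then have "2*g dvd (k - a)" by (rule dvdI)
      then have e2: "rotate (k - a) w = w" by (rule rot_dvd[OF g2])
      have e1: "rotate k w = rotate a (rotate (k-a) w)" using True by (simp add: rotate_rotate)
      have "rotate k w = rotate a w" using e1 unfolding e2 .
      then show ?thesis by (rule disjI2)
    next
      case f2: False
      then have "k' \<le> a'" using a' k' gpos by simp
      then have "even (a' - k')" using False \<open>odd a'\<close> by simp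
      then obtain t where t: "a' - k' = 2*t" by (elim evenE)
      have "a - k = g * (a' - k')" using a' k' by (simp add: diff_mult_distrib2)
      then have "a - k = (2*g) * t" using t by simp
      then have "2*g dvd (a - k)" by (rule dvdI)
      then have e2: "rotate (a - k) w = w" by (rule rot_dvd[OF g2])
      have e1: "rotate a w = rotate k (rotate (a-k) w)" using f2 by (simp add: rotate_rotate)
      have "rotate k w = rotate a w" using e1 unfolding e2 by (rule sym)
      then show ?thesis by (rule disjI2)
    qed
  qed
qed

definition Yset :: "nat \<Rightarrow> bool list set" where
  "Yset L = {w. length w = L \<and> rev w = map Not w \<and> map Not w \<in> rot_class w}"

definition Pal :: "nat \<Rightarrow> bool list set" where
  "Pal L = {u. length u = L \<and> rev u = u}"

lemma notcomp[simp]: "Not \<circ> Not = id" by auto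

lemma notnot[simp]: "map Not (map Not w) = w" by (induct w) auto

lemma map_Not_neq: "w \<noteq> [] \<Longrightarrow> map Not w \<noteq> w" by (cases w) auto

lemma rot2_of_sc: assumes "map Not w = rotate a w" shows "rotate (2*a) w = w"
proof -
  have "rotate (2*a) w = rotate a (rotate a w)" by (simp add: rotate_rotate mult_2)
  also have "\<dots> = rotate a (map Not w)" using assms by simp
  also have "\<dots> = map Not (rotate a w)" by (rule rotate_map)
  also have "\<dots> = map Not (map Not w)" using assms by simp
  finally show ?thesis by simp
qed

lemma rev_rotate': "rev (rotate k w) = rotate (length w - k mod length w) (rev w)"
  using rotate_rev[of "length w - k mod length w" w] rotate_rev[of k "rev w"] by simp

lemma fiber:
  assumes w: "w \<in> Yset n" and x: "x \<in> Yset n" and xw: "x \<in> rot_class w" and n: "n > 0"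
  shows "x = w \<or> x = map Not w"
proof -
  obtain k where xk: "x = rotate k w" using xw unfolding rot_class_def by auto
  obtain a where a: "map Not w = rotate a w" using w unfolding Yset_def rot_class_def by auto
  have lw: "length w = n" using w unfolding Yset_def by auto
  define m where "m = map Not w"
  have "rev x = rotate (n - k mod n) m" using rev_rotate'[of k w] xk lw w unfolding Yset_def m_def by simp
  moreover have "rev x = rotate k m" using x xk unfolding Yset_def m_def by (simp add: rotate_map)
  ultimately have "rotate k (rotate (n - k mod n) m) = rotate k (rotate k m)" by simp
  moreover have "rotate k (rotate (n - k mod n) m) = m"
    using rot_inv[of m k] lw unfolding m_def by (simp add: rotate_rotate add.commute)
  ultimately have "rotate (2*k) m = m" by (simp add: rotate_rotate mult_2)
  then have "map Not (rotate (2*k) m) = w" unfolding m_def by simp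
  then have k2: "rotate (2*k) w = w" unfolding m_def by (simp add: rotate_map)
  have "w \<noteq> []" using lw n by auto
  then have na: "rotate a w \<noteq> w" using a map_Not_neq by metis
  from core[OF rot2_of_sc[OF a] k2 na] show ?thesis using xk a by auto
qed

lemma no_odd_twist:
  assumes lw: "length w = n" and en: "even n" and n: "n > 0"
    and r: "rev w = rotate e (map Not w)" and oe: "odd e"
  shows False
proof -
  define e' where "e' = e mod n"
  have oe': "odd e'" unfolding e'_def using en oe by (simp add: dvd_mod_iff)
  have e'n: "e' < n" unfolding e'_def using n by simp
  define i where "i = (n - 1 - e') div 2"
  have i2: "2*i = n - 1 - e'" unfolding i_def using oe' en e'n
    by (metis One_nat_def Suc_pred dvd_diff_nat dvd_mult_div_cancel even_Suc n odd_pos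
        diff_diff_left le_add_diff_inverse2 less_imp_le_nat odd_add)
  have iin: "i < n" using i2 e'n by linarith
  have em: "(e + i) mod n = n - 1 - i"
  proof -
    have "(e + i) mod n = (e' + i) mod n" unfolding e'_def by (simp add: mod_add_left_eq)
    also have "e' + i = n - 1 - i" using i2 e'n by linarith
    finally show ?thesis using n by simp
  qed
  have "rev w ! i = w ! (n - 1 - i)" using iin lw by (simp add: rev_nth)
  moreover have "rotate e (map Not w) ! i = (\<not> w ! (n - 1 - i))"
    using iin lw em by (simp add: nth_rotate add.commute)
  ultimately show False using r by simp
qed

lemma surj_part:
  assumes lw: "length w0 = n" and en: "even n" and n: "n > 0"
    and rv: "rev w0 \<in> rot_class w0" and mn: "map Not w0 \<in> rot_class w0"
  shows "\<exists>x \<in> Yset n. rot_class x = rot_class w0"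
proof -
  obtain b where b: "rev w0 = rotate b w0" using rv unfolding rot_class_def by auto
  obtain a where a: "map Not w0 = rotate a w0" using mn unfolding rot_class_def by auto
  define a' where "a' = a mod n"
  have a'n: "a' < n" unfolding a'_def using n by simp
  have aa: "rotate a w0 = rotate a' w0" unfolding a'_def using lw rotate_conv_mod by metis
  define e where "e = b + (n - a')"
  have "rotate e (map Not w0) = rotate (e + a') w0" using a aa by (simp add: rotate_rotate)
  also have "e + a' = b + n" unfolding e_def using a'n by simp
  also have "rotate (b + n) w0 = rotate b w0"
    using lw by (metis rotate_conv_mod mod_add_self2)
  finally have re: "rev w0 = rotate e (map Not w0)" using b by simp
  have "even e" using no_odd_twist[OF lw en n re] by metis
  then obtain k where ek: "e = 2*k" by (elim evenE)
  define x where "x = rotate k w0"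
  define M where "M = map Not w0"
  have "rev x = rotate (n - k mod n) (rev w0)" unfolding x_def using rev_rotate'[of k w0] lw by simp
  also have "\<dots> = rotate (n - k mod n) (rotate k (rotate k M))"
    using re ek unfolding M_def by (simp add: rotate_rotate mult_2)
  also have "\<dots> = rotate k M" using rot_inv[of "rotate k M" k] lw unfolding M_def by simp
  finally have r1: "rev x = map Not x" unfolding x_def M_def by (simp add: rotate_map)
  have xin: "x \<in> rot_class w0" unfolding x_def rot_class_def by auto
  then have cx: "rot_class x = rot_class w0" by (rule rot_class_eq)
  have "map Not x \<in> map Not ` rot_class w0" using xin by auto
  also have "\<dots> = rot_class w0" unfolding map_rot_class by (rule rot_class_eq[OF mn])
  finally have "map Not x \<in> rot_class x" using cx by simp
  moreover have "length x = n" unfolding x_def using lw by simp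
  ultimately show ?thesis using r1 cx unfolding Yset_def by blast
qed

lemma S_eq:
  assumes en: "even n" and n: "n > 0"
  shows "{C \<in> necklaces n. achiral C \<and> self_complementary C} = rot_class ` Yset n"
proof
  show "{C \<in> necklaces n. achiral C \<and> self_complementary C} \<subseteq> rot_class ` Yset n"
  proof
    fix C assume "C \<in> {C \<in> necklaces n. achiral C \<and> self_complementary C}"
    then obtain w0 where C: "C = rot_class w0" "length w0 = n" "achiral (rot_class w0)"
      "self_complementary (rot_class w0)" unfolding necklaces_def by auto
    then obtain x where "x \<in> Yset n" "rot_class x = rot_class w0"
      using surj_part[OF C(2) en n] achiral_iff sc_iff by metis
    then show "C \<in> rot_class ` Yset n" using C by auto
  qed
next
  show "rot_class ` Yset n \<subseteq> {C \<in> necklaces n. achiral C \<and> self_complementary C}"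
  proof
    fix C assume "C \<in> rot_class ` Yset n"
    then obtain w where w: "w \<in> Yset n" "C = rot_class w" by auto
    then show "C \<in> {C \<in> necklaces n. achiral C \<and> self_complementary C}"
      unfolding necklaces_def Yset_def using achiral_iff sc_iff by auto
  qed
qed

lemma finite_len: "finite {w :: bool list. length w = n}"
  using finite_lists_length_eq[of "UNIV :: bool set" n] by simp

lemma card_len: "card {w :: bool list. length w = n} = 2 ^ n"
  using card_lists_length_eq[of "UNIV :: bool set" n] by simp

lemma finite_Y: "finite (Yset n)"
  by (rule finite_subset[OF _ finite_len[of n]]) (auto simp: Yset_def)

lemma fiber_set:
  assumes w: "w \<in> Yset n" and n: "n > 0"
  shows "Yset n \<inter> rot_class w = {w, map Not w}"
proof
  show "Yset n \<inter> rot_class w \<subseteq> {w, map Not w}"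
  proof
    fix x assume "x \<in> Yset n \<inter> rot_class w"
    then have "x = w \<or> x = map Not w" using fiber[OF w _ _ n] by auto
    then show "x \<in> {w, map Not w}" by auto
  qed
next
  have mw: "map Not w \<in> rot_class w" using w unfolding Yset_def by auto
  have "map Not w \<in> Yset n"
    using w rot_class_sym[OF mw] unfolding Yset_def by (auto simp: rev_map)
  then show "{w, map Not w} \<subseteq> Yset n \<inter> rot_class w" using w mw rot_class_self by auto
qed

lemma card_Y:
  assumes en: "even n" and n: "n > 0"
  shows "card (Yset n) = 2 * card {C \<in> necklaces n. achiral C \<and> self_complementary C}"
proof -
  let ?S = "rot_class ` Yset n"
  have fS: "finite ?S" using finite_Y by simp
  have eq: "Yset n = (\<Union>C\<in>?S. Yset n \<inter> C)"
  proof
    show "Yset n \<subseteq> (\<Union>C\<in>?S. Yset n \<inter> C)"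
    proof
      fix w assume "w \<in> Yset n"
      then have "w \<in> Yset n \<inter> rot_class w" "rot_class w \<in> ?S" using rot_class_self by auto
      then show "w \<in> (\<Union>C\<in>?S. Yset n \<inter> C)" by blast
    qed
  qed auto
  have "card (Yset n) = (\<Sum>C\<in>?S. card (Yset n \<inter> C))"
  proof -
    have "card (\<Union>C\<in>?S. Yset n \<inter> C) = (\<Sum>C\<in>?S. card (Yset n \<inter> C))"
    proof (rule card_UN_disjoint[OF fS])
      show "\<forall>C\<in>?S. finite (Yset n \<inter> C)" using finite_Y by blast
      show "\<forall>C\<in>?S. \<forall>D\<in>?S. C \<noteq> D \<longrightarrow> (Yset n \<inter> C) \<inter> (Yset n \<inter> D) = {}"
      proof (intro ballI impI)
        fix C D assume C: "C \<in> ?S" and D: "D \<in> ?S" and ne: "C \<noteq> D"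
        then obtain w w' where Cw: "C = rot_class w" and Dw: "D = rot_class w'" by auto
        show "(Yset n \<inter> C) \<inter> (Yset n \<inter> D) = {}"
        proof (rule ccontr)
          assume "(Yset n \<inter> C) \<inter> (Yset n \<inter> D) \<noteq> {}"
          then obtain x where "x \<in> C" "x \<in> D" by auto
          then have "rot_class x = C" "rot_class x = D" using rot_class_eq[of x w] rot_class_eq[of x w'] Cw Dw by auto
          then show False using ne by simp
        qed
      qed
    qed
    then show ?thesis using eq by simp
  qed
  also have "\<dots> = (\<Sum>C\<in>?S. 2)"
  proof (rule sum.cong[OF refl])
    fix C assume "C \<in> ?S"
    then obtain w where w: "w \<in> Yset n" "C = rot_class w" by auto
    have "w \<noteq> []" using w n unfolding Yset_def by auto
    then have "w \<noteq> map Not w" using map_Not_neq by metis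
    then show "card (Yset n \<inter> C) = 2" using fiber_set[OF w(1) n] w(2) by simp
  qed
  also have "\<dots> = 2 * card ?S" by simp
  finally show ?thesis unfolding S_eq[OF en n] .
qed

lemma rotate1_double: "rotate1 (v @ v) = rotate1 v @ rotate1 v"
  by (cases v) auto

lemma rotate_double: "rotate k (v @ v) = rotate k v @ rotate k v"
proof (induction k)
  case (Suc k)
  then show ?case by (simp add: rotate1_double)
qed simp

lemma Y_odd: assumes "odd L" shows "Yset L = {}"
proof (rule ccontr)
  assume "Yset L \<noteq> {}"
  then obtain w where w: "length w = L" "rev w = map Not w" unfolding Yset_def by auto
  define i where "i = L div 2"
  have iL: "i < L" using assms unfolding i_def by (cases L) auto
  have li: "L - Suc i = i" using assms unfolding i_def by (elim oddE) simp
  have "rev w ! i = w ! i" using iL w(1) li by (simp add: rev_nth)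
  moreover have "map Not w ! i = (\<not> w ! i)" using iL w(1) by simp
  ultimately show False using w(2) by simp
qed

lemma card_Pal: "card (Pal N) = 2 ^ ((N + 1) div 2)"
proof -
  define h where "h = (N + 1) div 2"
  have hN: "h \<le> N" unfolding h_def by simp
  have "bij_betw (take h) (Pal N) {v. length v = h}"
  proof (rule bij_betwI')
    fix u u' :: "bool list" assume u: "u \<in> Pal N" and u': "u' \<in> Pal N"
    show "(take h u = take h u') = (u = u')"
    proof
      assume t: "take h u = take h u'"
      have lu: "length u = N" "rev u = u" using u unfolding Pal_def by auto
      have lu': "length u' = N" "rev u' = u'" using u' unfolding Pal_def by auto
      have key: "u ! i = u' ! i" if "i < N" for i
      proof (cases "i < h")
        case True
        then have "take h u ! i = take h u' ! i" using t by simp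
        then show ?thesis using True by simp
      next
        case False
        have j: "N - Suc i < h" using False that unfolding h_def by simp
        have "u ! i = rev u ! i" using lu by simp
        also have "\<dots> = u ! (N - Suc i)" using rev_nth[of i u] that lu(1) by simp
        also have "\<dots> = take h u ! (N - Suc i)" using j by simp
        also have "\<dots> = take h u' ! (N - Suc i)" using t by simp
        also have "\<dots> = u' ! (N - Suc i)" using j by simp
        also have "\<dots> = rev u' ! i" using rev_nth[of i u'] that lu'(1) by simp
        also have "\<dots> = u' ! i" using lu' by simp
        finally show ?thesis .
      qed
      show "u = u'" using key lu lu' by (intro nth_equalityI) auto
    qed simp
  next
    fix u :: "bool list" assume "u \<in> Pal N"
    then show "take h u \<in> {v. length v = h}" using hN unfolding Pal_def by auto
  next
    fix v :: "bool list" assume v: "v \<in> {v. length v = h}"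
    define u where "u = map (\<lambda>i. v ! min i (N - 1 - i)) [0..<N]"
    have lu: "length u = N" unfolding u_def by simp
    have "rev u = u"
    proof (rule nth_equalityI)
      show "length (rev u) = length u" by simp
      fix i assume "i < length (rev u)"
      then have i: "i < N" using lu by simp
      have "rev u ! i = u ! (N - Suc i)" using i lu by (simp add: rev_nth)
      also have "\<dots> = v ! min (N - Suc i) (N - 1 - (N - Suc i))" unfolding u_def using i by simp
      also have "\<dots> = v ! min i (N - 1 - i)" using i by (simp add: min.commute)
      also have "\<dots> = u ! i" unfolding u_def using i by simp
      finally show "rev u ! i = u ! i" .
    qed
    then have uP: "u \<in> Pal N" using lu unfolding Pal_def by simp
    have "take h u = v"
    proof (rule nth_equalityI)
      show "length (take h u) = length v" using v lu hN by simp
      fix i assume "i < length (take h u)"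
      then have i: "i < h" using lu hN by simp
      then have "min i (N - 1 - i) = i" unfolding h_def by simp
      then show "take h u ! i = v ! i" unfolding u_def using i hN by simp
    qed
    then show "\<exists>u\<in>Pal N. v = take h u" using uP by auto
  qed
  then have "card (Pal N) = card {v :: bool list. length v = h}" by (rule bij_betw_same_card)
  then show ?thesis using card_len unfolding h_def by simp
qed

lemma decomp:
  assumes N: "N \<ge> 1"
  shows "Yset (2*N) = (\<lambda>u. u @ map Not u) ` Pal N \<union> (\<lambda>v. v @ v) ` Yset N"
proof
  show "Yset (2*N) \<subseteq> (\<lambda>u. u @ map Not u) ` Pal N \<union> (\<lambda>v. v @ v) ` Yset N"
  proof
    fix w assume w: "w \<in> Yset (2*N)"
    have lw: "length w = 2*N" and rw: "rev w = map Not w" and mw: "map Not w \<in> rot_class w"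
      using w unfolding Yset_def by auto
    obtain a where a: "map Not w = rotate a w" using mw unfolding rot_class_def by auto
    have "w \<noteq> []" using lw N by auto
    then have na: "rotate a w \<noteq> w" using a map_Not_neq by metis
    have n2: "rotate (2*N) w = w" using lw by simp
    have rNcases: "rotate N w = w \<or> rotate N w = map Not w"
      using core[OF rot2_of_sc[OF a] n2 na] a by simp
    define u where "u = take N w"
    define y where "y = drop N w"
    have wuy: "w = u @ y" unfolding u_def y_def by simp
    have lu: "length u = N" and ly: "length y = N" unfolding u_def y_def using lw by auto
    have rN: "rotate N w = y @ u" using rotate_append[of u y] wuy lu by simp
    from rNcases show "w \<in> (\<lambda>u. u @ map Not u) ` Pal N \<union> (\<lambda>v. v @ v) ` Yset N"
    proof
      assume rNw: "rotate N w = w"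
      have "y @ u = rotate N w" using rN by (rule sym)
      also have "\<dots> = w" by (rule rNw)
      also have "\<dots> = u @ y" by (rule wuy)
      finally have "y @ u = u @ y" .
      then have yu: "y = u" using lu ly by (metis append_eq_append_conv)
      then have wuu: "w = u @ u" using wuy by simp
      have "rev u @ rev u = map Not u @ map Not u" using rw wuu by simp
      then have r: "rev u = map Not u" using lu by simp
      obtain k where "map Not w = rotate k w" using mw unfolding rot_class_def by auto
      then have "map Not u @ map Not u = rotate k u @ rotate k u" using wuu by (simp add: rotate_double)
      then have "map Not u = rotate k u" using lu by simp
      then have "map Not u \<in> rot_class u" unfolding rot_class_def by blast
      then have "u \<in> Yset N" using lu r unfolding Yset_def by simp
      then have "w \<in> (\<lambda>v. v @ v) ` Yset N" using wuu by (rule rev_image_eqI)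
      then show ?thesis by (rule UnI2)
    next
      assume rNw: "rotate N w = map Not w"
      have "y @ u = rotate N w" using rN by (rule sym)
      also have "\<dots> = map Not w" by (rule rNw)
      also have "\<dots> = map Not u @ map Not y" unfolding wuy by simp
      finally have "y @ u = map Not u @ map Not y" .
      then have yu: "y = map Not u" using lu ly by (metis append_eq_append_conv length_map)
      then have wu: "w = u @ map Not u" using wuy by simp
      have "map Not (rev u) @ rev u = map Not u @ u" using rw wu by (simp add: rev_map)
      then have "map Not (rev u) = map Not u" using lu by simp
      then have "map Not (map Not (rev u)) = map Not (map Not u)" by (rule arg_cong)
      then have "rev u = u" by (simp only: notnot)
      then have "u \<in> Pal N" using lu unfolding Pal_def by simp
      then have "w \<in> (\<lambda>u. u @ map Not u) ` Pal N" using wu by (rule rev_image_eqI)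
      then show ?thesis by (rule UnI1)
    qed
  qed
next
  show "(\<lambda>u. u @ map Not u) ` Pal N \<union> (\<lambda>v. v @ v) ` Yset N \<subseteq> Yset (2*N)"
  proof
    fix w assume "w \<in> (\<lambda>u. u @ map Not u) ` Pal N \<union> (\<lambda>v. v @ v) ` Yset N"
    then show "w \<in> Yset (2*N)"
    proof
      assume "w \<in> (\<lambda>u. u @ map Not u) ` Pal N"
      then obtain u where u: "u \<in> Pal N" and wu: "w = u @ map Not u" by auto
      have lu: "length u = N" and ru: "rev u = u" using u unfolding Pal_def by auto
      have "rev w = map Not u @ u" using wu ru by (simp add: rev_map)
      moreover have "map Not w = map Not u @ u" using wu by simp
      moreover have "rotate N w = map Not u @ u" using wu lu rotate_append[of u "map Not u"] by simp
      ultimately have "map Not w = rotate N w" by simp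
      then have "map Not w \<in> rot_class w" unfolding rot_class_def by blast
      moreover have "length w = 2*N" using wu lu by simp
      ultimately show ?thesis using \<open>rev w = map Not u @ u\<close> \<open>map Not w = map Not u @ u\<close>
        unfolding Yset_def by simp
    next
      assume "w \<in> (\<lambda>v. v @ v) ` Yset N"
      then obtain v where v: "v \<in> Yset N" and wv: "w = v @ v" by auto
      have lv: "length v = N" and rv: "rev v = map Not v" and mv: "map Not v \<in> rot_class v"
        using v unfolding Yset_def by auto
      obtain k where k: "map Not v = rotate k v" using mv unfolding rot_class_def by auto
      have "rev w = map Not w" using wv rv by simp
      moreover have "map Not w = rotate k w" using wv k by (simp add: rotate_double)
      moreover from \<open>map Not w = rotate k w\<close> have "map Not w \<in> rot_class w"
        unfolding rot_class_def by blast
      moreover have "length w = 2*N" using wv lv by simp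
      ultimately show ?thesis unfolding Yset_def by simp
    qed
  qed
qed

lemma card_decomp:
  assumes N: "N \<ge> 1"
  shows "card (Yset (2*N)) = 2 ^ ((N + 1) div 2) + card (Yset N)"
proof -
  have fP: "finite (Pal N)"
    by (rule finite_subset[OF _ finite_len[of N]]) (auto simp: Pal_def)
  have i1: "inj_on (\<lambda>u. u @ map Not u) (Pal N)"
  proof (rule inj_onI)
    fix x y assume "x \<in> Pal N" "y \<in> Pal N" "x @ map Not x = y @ map Not y"
    then show "x = y" unfolding Pal_def by (auto simp: append_eq_append_conv)
  qed
  have i2: "inj_on (\<lambda>v. v @ v) (Yset N)"
  proof (rule inj_onI)
    fix x y assume "x \<in> Yset N" "y \<in> Yset N" "x @ x = y @ y"
    then show "x = y" unfolding Yset_def by (auto simp: append_eq_append_conv)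
  qed
  have disj: "(\<lambda>u. u @ map Not u) ` Pal N \<inter> (\<lambda>v. v @ v) ` Yset N = {}"
  proof (rule ccontr)
    assume "(\<lambda>u. u @ map Not u) ` Pal N \<inter> (\<lambda>v. v @ v) ` Yset N \<noteq> {}"
    then obtain u v where u: "u \<in> Pal N" and v: "v \<in> Yset N" and e: "u @ map Not u = v @ v" by blast
    have "length u = N" "length v = N" using u v unfolding Pal_def Yset_def by auto
    then have "u = v" "map Not u = v" using e by (auto simp: append_eq_append_conv)
    then have "map Not u = u" by simp
    moreover have "u \<noteq> []" using \<open>length u = N\<close> N by auto
    ultimately show False using map_Not_neq by metis
  qed
  have "card (Yset (2*N)) = card ((\<lambda>u. u @ map Not u) ` Pal N) + card ((\<lambda>v. v @ v) ` Yset N)"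
    unfolding decomp[OF N] using fP finite_Y disj by (intro card_Un_disjoint) auto
  also have "\<dots> = card (Pal N) + card (Yset N)" using card_image[OF i1] card_image[OF i2] by simp
  finally show ?thesis using card_Pal by simp
qed

lemma Y_mod4: "N \<ge> 1 \<Longrightarrow> card (Yset (2*N)) mod 4 = (if N = 1 then 2 else 0)"
proof (induction N rule: less_induct)
  case (less N)
  have cd: "card (Yset (2*N)) = 2 ^ ((N + 1) div 2) + card (Yset N)" using card_decomp[OF less.prems] .
  show ?case
  proof (cases "N = 1")
    case True
    then show ?thesis using cd Y_odd[of 1] by simp
  next
    case False
    then have N2: "N \<ge> 2" using less.prems by simp
    show ?thesis
    proof (cases "N = 2")
      case True
      have h: "card (Yset 2) mod 4 = 2" using less.IH[of 1] True by simp
      have e: "card (Yset (2*N)) = 2 + card (Yset 2)" using cd True by simp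
      have "card (Yset (2*N)) mod 4 = 0" unfolding e using h by presburger
      then show ?thesis using True by simp
    next
      case F2: False
      then have N3: "N \<ge> 3" using N2 by simp
      have "(2::nat) ^ 2 dvd 2 ^ ((N + 1) div 2)"
        by (rule le_imp_power_dvd) (use N3 in simp)
      then have p4: "(4::nat) dvd 2 ^ ((N + 1) div 2)" by simp
      have c4: "(4::nat) dvd card (Yset N)"
      proof (cases "even N")
        case True
        then obtain M where M: "N = 2*M" by (elim evenE)
        then have "M \<ge> 2" "M < N" using N3 by auto
        then have "card (Yset (2*M)) mod 4 = 0" using less.IH[of M] by simp
        then show ?thesis using M by auto
      next
        case False
        then show ?thesis using Y_odd by simp
      qed
      show ?thesis using p4 c4 cd F2 False by auto
    qed
  qed
qed

theorem lemma2p3: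
  fixes N :: nat
  assumes "N > 1"
  shows "even (card {C \<in> necklaces (2 * N). achiral C \<and> self_complementary C})"
proof -
  have "card (Yset (2*N)) = 2 * card {C \<in> necklaces (2 * N). achiral C \<and> self_complementary C}"
    using card_Y[of "2*N"] assms by simp
  moreover have "card (Yset (2*N)) mod 4 = 0" using Y_mod4[of N] assms by simp
  ultimately show ?thesis by presburger
qed

end
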